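(* If $q\in L_1[0,\pi]$ (with $C_0=0$), then for every positive integer $n$ \[ B_{1,n}(n^2)=-\frac{1}{\pi}\int_0^\pi Q^2(x)\cos 2nx\,dx, \] where $B_{1,n}(n^2)=\sum_{k\in\mathbb{Z},\,k\neq0,-2n}\frac{C_kC_{k+2n}}{n^2-(n+k)^2}$ and $Q(x)=\int_0^x q(t)\,dt$.
   Context: $q$ is a complex-valued summable function on $[0,\pi]$; $C_k=\frac{1}{\pi}\int_0^\pi q(x)\cos kx\,dx$ for $k\in\mathbb{Z}$, and it is assumed that $C_0=0$. *)

theory Defs
  imports "HOL-Analysis.Analysis"
begin

definition cos_coeff :: "(real \<Rightarrow> complex) \<Rightarrow> int \<Rightarrow> complex" where
  "cos_coeff q k = (1 / pi) * (LINT x:{0..pi}|lborel. q x * complex_of_real (cos (real_of_int k * x)))"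

definition prim :: "(real \<Rightarrow> complex) \<Rightarrow> real \<Rightarrow> complex" where
  "prim q x = (LINT t:{0..x}|lborel. q t)"

end

theory Submission
  imports Defs
begin

lemma summable_inv_sq_nat: "(\<lambda>m::nat. 1 / (1 + real m ^ 2)) summable_on UNIV"
proof -
  have "summable (\<lambda>m::nat. 1 / (1 + real m ^ 2))"
  proof (rule summable_comparison_test'[where N=1])
    show "summable (\<lambda>m::nat. inverse (real m ^ 2))"
      using inverse_power_summable[of 2] by simp
    fix m :: nat assume "1 \<le> m"
    have "real m ^ 2 > 0" using \<open>1 \<le> m\<close> by simp
    then have "1 / (1 + real m ^ 2) \<le> 1 / (real m ^ 2)" by (intro frac_le) auto
    then show "norm (1 / (1 + real m ^ 2)) \<le> inverse (real m ^ 2)"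
      by (simp add: inverse_eq_divide)
  qed
  then show ?thesis
    by (subst summable_on_UNIV_nonneg_real_iff) auto
qed

lemma summable_inv_sq_int: "(\<lambda>k::int. 1 / (1 + real_of_int k ^ 2)) summable_on UNIV"
proof -
  have U: "(UNIV::int set) = range int \<union> range (\<lambda>m. - int m)"
  proof -
    have "k \<in> range int \<union> range (\<lambda>m. - int m)" for k :: int
    proof (cases "k \<ge> 0")
      case True then show ?thesis by (metis UnI1 nonneg_int_cases rangeI)
    next
      case False then have "k = - int (nat (-k))" by simp
      then show ?thesis by blast
    qed
    then show ?thesis by blast
  qed
  have a: "(\<lambda>k::int. 1 / (1 + real_of_int k ^ 2)) summable_on range int"
    by (subst summable_on_reindex) (auto simp: o_def intro: summable_inv_sq_nat)
  have b: "(\<lambda>k::int. 1 / (1 + real_of_int k ^ 2)) summable_on range (\<lambda>m. - int m)"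
    by (subst summable_on_reindex) (auto simp: o_def inj_on_def intro: summable_inv_sq_nat)
  show ?thesis unfolding U using a b by (rule summable_on_union)
qed

lemma w_bound_int:
  fixes n :: nat and k :: int
  assumes "n > 0" "k \<noteq> 0" "k \<noteq> - 2 * int n"
  shows "1 + k ^ 2 \<le> (4 * int n ^ 2 + 4 * int n + 3) * \<bar>k * (k + 2 * int n)\<bar>"
proof -
  define K where "K = 4 * int n ^ 2 + 4 * int n + 3"
  have K0: "K \<ge> 4 * int n + 2" unfolding K_def by simp
  have K1: "K \<ge> 4 * int n ^ 2 + 1" unfolding K_def by simp
  have n0: "int n \<ge> 0" by simp
  have main: "1 + k ^ 2 \<le> K * \<bar>k * (k + 2 * int n)\<bar>"
  proof (cases "k > 0")
    case True
    define A where "A = k * (k + 2 * int n)"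
    have A1: "k * k \<le> A" unfolding A_def using True by (simp add: mult_left_mono)
    have k1: "1 \<le> k * k" using True by (simp add: int_one_le_iff_zero_less)
    have A0: "0 \<le> A" using A1 k1 by linarith
    have "2 * A \<le> K * A" by (rule mult_right_mono) (use K0 A0 in auto)
    have "k ^ 2 = k * k" by (simp add: power2_eq_square)
    then show ?thesis using A1 k1 A0 \<open>2 * A \<le> K * A\<close> unfolding A_def[symmetric] by linarith
  next
    case False
    show ?thesis
    proof (cases "k < - 2 * int n")
      case True
      define m where "m = - k"
      have m: "m \<ge> 2 * int n + 1" using True m_def by simp
      define A where "A = m * (m - 2 * int n)"
      have Ae: "k * (k + 2 * int n) = A" unfolding A_def m_def by (simp add: algebra_simps)
      have "2 * int n * (2 * int n + 1) \<le> 2 * int n * m" by (rule mult_left_mono) (use m in auto)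
      then have s1: "m \<le> (2 * int n + 1) * (m - 2 * int n)" by (simp add: algebra_simps)
      have "m * m \<le> m * ((2 * int n + 1) * (m - 2 * int n))" by (rule mult_left_mono[OF s1]) (use m in auto)
      then have s2: "m * m \<le> (2 * int n + 1) * A" unfolding A_def by (simp add: algebra_simps)
      have A0: "0 \<le> A" unfolding A_def using m by simp
      have "(4 * int n + 2) * A \<le> K * A" by (rule mult_right_mono) (use K0 A0 in auto)
      moreover have k1: "1 \<le> m * m"
      proof -
        have "1 \<le> m" using m n0 by linarith
        then have "1 * 1 \<le> m * m" by (intro mult_mono) auto
        then show ?thesis by simp
      qed
      moreover have "k ^ 2 = m * m" unfolding m_def by (simp add: power2_eq_square)
      moreover have "(4 * int n + 2) * A = 2 * ((2 * int n + 1) * A)" by (simp add: algebra_simps)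
      ultimately show ?thesis using s2 A0 unfolding Ae by linarith
    next
      case False2: False
      have k1: "- 2 * int n < k" "k < 0" using False False2 assms by auto
      then have "k * (k + 2 * int n) \<noteq> 0" by auto
      then have a1: "1 \<le> \<bar>k * (k + 2 * int n)\<bar>" by linarith
      have "\<bar>k\<bar> \<le> 2 * int n" using k1 by simp
      then have "\<bar>k\<bar>^2 \<le> (2 * int n)^2" by (intro power_mono) auto
      then have a2: "k ^ 2 \<le> 4 * int n ^ 2" by (simp add: power_mult_distrib)
      have "K * 1 \<le> K * \<bar>k * (k + 2 * int n)\<bar>" by (rule mult_left_mono[OF a1]) (use K1 n0 in \<open>smt (verit) zero_le_power2\<close>)
      then show ?thesis using a2 K1 by simp
    qed
  qed
  then show ?thesis unfolding K_def .
qed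

lemma w_bound:
  fixes n :: nat and k :: int
  assumes "n > 0" "k \<noteq> 0" "k \<noteq> - 2 * int n"
  shows "1 + real_of_int k ^ 2 \<le> (4 * real n ^ 2 + 4 * real n + 3) * \<bar>real n ^ 2 - (real n + real_of_int k) ^ 2\<bar>"
proof -
  have e: "real n ^ 2 - (real n + real_of_int k) ^ 2 = - real_of_int (k * (k + 2 * int n))"
    by (simp add: algebra_simps power2_eq_square)
  have "real_of_int (1 + k ^ 2) \<le> real_of_int ((4 * int n ^ 2 + 4 * int n + 3) * \<bar>k * (k + 2 * int n)\<bar>)"
    using w_bound_int[OF assms] by linarith
  then show ?thesis unfolding e by simp
qed

lemma si_mult_bounded:
  fixes q g :: "real \<Rightarrow> complex"
  assumes q: "set_integrable lborel A q" and g: "g \<in> borel_measurable borel"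
    and B: "\<And>x. norm (g x) \<le> B"
  shows "set_integrable lborel A (\<lambda>x. q x * g x)"
proof -
  have F: "integrable lborel (\<lambda>x. indicator A x *\<^sub>R q x)" using q by (simp add: set_integrable_def)
  have m: "(\<lambda>x. indicator A x *\<^sub>R q x) \<in> borel_measurable lborel" using F by (rule borel_measurable_integrable)
  have gm: "g \<in> borel_measurable lborel" using g by simp
  have "integrable lborel (\<lambda>x. (indicator A x *\<^sub>R q x) * g x)"
  proof (rule Bochner_Integration.integrable_bound[OF integrable_mult_right[OF F, of "complex_of_real B"]])
    show "(\<lambda>x. (indicator A x *\<^sub>R q x) * g x) \<in> borel_measurable lborel" using m gm by measurable
    show "AE x in lborel. norm (indicat_real A x *\<^sub>R q x * g x) \<le> norm (complex_of_real B * (indicat_real A x *\<^sub>R q x))"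
    proof (rule AE_I2)
      fix x
      have "0 \<le> B" using B[of x] norm_ge_zero order_trans by blast
      have "cmod (g x) * cmod (q x) \<le> B * cmod (q x)" by (rule mult_right_mono) (use B[of x] in auto)
      then have "indicat_real A x * (cmod (g x) * cmod (q x)) \<le> indicat_real A x * (B * cmod (q x))"
        by (rule mult_left_mono) auto
      then show "norm (indicat_real A x *\<^sub>R q x * g x) \<le> norm (complex_of_real B * (indicat_real A x *\<^sub>R q x))"
        using \<open>0 \<le> B\<close> by (simp add: norm_mult mult_ac)
    qed
  qed
  then show ?thesis by (simp add: set_integrable_def mult.assoc)
qed

lemma si_mult_cos:
  fixes q :: "real \<Rightarrow> complex"
  assumes q: "set_integrable lborel A q"
  shows "set_integrable lborel A (\<lambda>x. q x * complex_of_real (cos (a * x)))"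
  by (rule si_mult_bounded[OF q, where B=1]) auto

lemma cos_coeff_bound:
  fixes q :: "real \<Rightarrow> complex"
  assumes q: "set_integrable lborel {0..pi} q"
  shows "norm (cos_coeff q k) \<le> (LINT x:{0..pi}|lborel. norm (q x)) / pi"
proof -
  have "norm (LINT x:{0..pi}|lborel. q x * complex_of_real (cos (real_of_int k * x)))
      \<le> (LINT x:{0..pi}|lborel. norm (q x * complex_of_real (cos (real_of_int k * x))))"
    by (rule set_integral_norm_bound[OF si_mult_cos[OF q]])
  also have "\<dots> \<le> (LINT x:{0..pi}|lborel. norm (q x))"
  proof (rule set_integral_mono)
    show "set_integrable lborel {0..pi} (\<lambda>x. norm (q x * complex_of_real (cos (real_of_int k * x))))"
      by (rule set_integrable_norm[OF si_mult_cos[OF q]])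
    show "set_integrable lborel {0..pi} (\<lambda>x. norm (q x))" by (rule set_integrable_norm[OF q])
  qed (auto simp: norm_mult mult_left_le)
  finally show ?thesis
    unfolding cos_coeff_def by (simp add: norm_divide divide_right_mono)
qed

lemma prim_eq_integral:
  fixes q :: "real \<Rightarrow> complex"
  assumes q: "set_integrable lborel {0..pi} q" and x: "x \<le> pi"
  shows "prim q x = integral {0..x} q"
proof -
  have "set_integrable lborel {0..x} q"
    by (rule set_integrable_subset[OF q]) (use x in auto)
  then show ?thesis unfolding prim_def by (rule set_borel_integral_eq_integral)
qed

lemma prim_cont:
  fixes q :: "real \<Rightarrow> complex"
  assumes q: "set_integrable lborel {0..pi} q"
  shows "continuous_on {0..pi} (prim q)"
proof -
  have "q integrable_on {0..pi}" using set_borel_integral_eq_integral(1)[OF q] .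
  then have "continuous_on {0..pi} (\<lambda>x. integral {0..x} q)" by (rule indefinite_integral_continuous_1)
  then show ?thesis by (rule continuous_on_eq) (auto simp: prim_eq_integral[OF q])
qed

lemma prim_bound:
  fixes q :: "real \<Rightarrow> complex"
  assumes q: "set_integrable lborel {0..pi} q" and x: "x \<le> pi"
  shows "norm (prim q x) \<le> (LINT x:{0..pi}|lborel. norm (q x))"
proof -
  have qx: "set_integrable lborel {0..x} q"
    by (rule set_integrable_subset[OF q]) (use x in auto)
  have "norm (prim q x) \<le> (LINT t:{0..x}|lborel. norm (q t))"
    unfolding prim_def by (rule set_integral_norm_bound[OF qx])
  also have "\<dots> \<le> (LINT t:{0..pi}|lborel. norm (q t))"
    unfolding set_lebesgue_integral_def
    apply (rule integral_mono)
    using set_integrable_norm[OF qx] set_integrable_norm[OF q] apply (auto simp: set_integrable_def)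
    apply (auto simp: indicator_def)
    using x by auto
  finally show ?thesis .
qed

lemma prim_add:
  fixes q r :: "real \<Rightarrow> complex"
  assumes q: "set_integrable lborel {0..pi} q" and r: "set_integrable lborel {0..pi} r" and x: "x \<le> pi"
  shows "prim (\<lambda>t. q t + r t) x = prim q x + prim r x"
    "prim (\<lambda>t. q t - r t) x = prim q x - prim r x"
proof -
  have qx: "set_integrable lborel {0..x} q" by (rule set_integrable_subset[OF q]) (use x in auto)
  have rx: "set_integrable lborel {0..x} r" by (rule set_integrable_subset[OF r]) (use x in auto)
  show "prim (\<lambda>t. q t + r t) x = prim q x + prim r x"
    unfolding prim_def using qx rx by (simp add: set_integral_add)
  show "prim (\<lambda>t. q t - r t) x = prim q x - prim r x"
    unfolding prim_def using qx rx by (simp add: set_integral_diff)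
qed

definition Kn :: "nat \<Rightarrow> real" where "Kn n = 4 * real n ^ 2 + 4 * real n + 3"
definition Dset :: "nat \<Rightarrow> int set" where "Dset n = UNIV - {0, - 2 * int n}"
definition den :: "nat \<Rightarrow> int \<Rightarrow> complex" where
  "den n k = complex_of_real (real n ^ 2 - (real n + real_of_int k) ^ 2)"
definition L1n :: "(real \<Rightarrow> complex) \<Rightarrow> real" where
  "L1n q = (LINT x:{0..pi}|lborel. norm (q x))"
definition trm :: "nat \<Rightarrow> (real \<Rightarrow> complex) \<Rightarrow> (real \<Rightarrow> complex) \<Rightarrow> int \<Rightarrow> complex" where
  "trm n q r k = cos_coeff q k * cos_coeff r (k + 2 * int n) / den n k"

lemma Kn_pos: "Kn n > 0" unfolding Kn_def by (simp add: add_nonneg_pos)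

lemma L1n_nonneg: "L1n q \<ge> 0" unfolding L1n_def set_lebesgue_integral_def by (rule Bochner_Integration.integral_nonneg) simp

lemma inv_den_bound:
  assumes "n > 0" "k \<in> Dset n"
  shows "norm (1 / den n k) \<le> Kn n / (1 + real_of_int k ^ 2)"
proof -
  have k: "k \<noteq> 0" "k \<noteq> - 2 * int n" using assms by (auto simp: Dset_def)
  define d where "d = real n ^ 2 - (real n + real_of_int k) ^ 2"
  have b: "1 + real_of_int k ^ 2 \<le> Kn n * \<bar>d\<bar>" using w_bound[OF assms(1) k] by (simp add: Kn_def d_def)
  have p: "0 < 1 + real_of_int k ^ 2" by (simp add: add_pos_nonneg)
  then have "\<bar>d\<bar> > 0" using b Kn_pos[of n] by (smt (verit) mult_nonneg_nonpos)
  have dd: "den n k = complex_of_real d" by (simp add: den_def d_def)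
  have "norm (1 / den n k) = 1 / \<bar>d\<bar>" unfolding dd by (simp only: norm_divide norm_one norm_of_real)
  also have "\<dots> \<le> Kn n / (1 + real_of_int k ^ 2)"
    using b p \<open>\<bar>d\<bar> > 0\<close> by (simp add: divide_simps mult.commute)
  finally show ?thesis .
qed

lemma maj_summable: "(\<lambda>k::int. c * (Kn n / (1 + real_of_int k ^ 2))) summable_on A"
proof -
  have "(\<lambda>k::int. 1 / (1 + real_of_int k ^ 2)) summable_on A"
    by (rule summable_on_subset_banach[OF summable_inv_sq_int]) auto
  then have "(\<lambda>k::int. (c * Kn n) * (1 / (1 + real_of_int k ^ 2))) summable_on A"
    by (rule summable_on_cmult_right)
  then show ?thesis by simp
qed

lemma trm_bound:
  assumes "n > 0" "k \<in> Dset n" and q: "set_integrable lborel {0..pi} q" and r: "set_integrable lborel {0..pi} r"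
  shows "norm (trm n q r k) \<le> (L1n q / pi) * (L1n r / pi) * (Kn n / (1 + real_of_int k ^ 2))"
proof -
  have "norm (trm n q r k) = norm (cos_coeff q k) * norm (cos_coeff r (k + 2 * int n)) * norm (1 / den n k)"
    by (simp add: trm_def norm_mult norm_divide)
  also have "\<dots> \<le> (L1n q / pi) * (L1n r / pi) * (Kn n / (1 + real_of_int k ^ 2))"
    apply (intro mult_mono)
    using cos_coeff_bound[OF q] cos_coeff_bound[OF r] inv_den_bound[OF assms(1,2)] L1n_nonneg
    by (auto simp: L1n_def)
  finally show ?thesis .
qed

lemma trm_abs_summable:
  assumes "n > 0" and q: "set_integrable lborel {0..pi} q" and r: "set_integrable lborel {0..pi} r"
  shows "(\<lambda>k. norm (trm n q r k)) summable_on Dset n"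
proof (rule Infinite_Sum.abs_summable_on_comparison_test)
  let ?g = "\<lambda>k::int. ((L1n q / pi) * (L1n r / pi)) * (Kn n / (1 + real_of_int k ^ 2))"
  have nn: "0 \<le> ?g k" for k using L1n_nonneg[of q] L1n_nonneg[of r] Kn_pos[of n]
    by (intro mult_nonneg_nonneg divide_nonneg_pos) (auto simp: add_pos_nonneg)
  have e: "(\<lambda>k. norm (?g k)) = ?g"
  proof
    fix k show "norm (?g k) = ?g k" using nn[of k] by (simp only: real_norm_def abs_of_nonneg)
  qed
  show "(\<lambda>k. norm (?g k)) summable_on Dset n" unfolding e
    by (rule maj_summable[of "(L1n q / pi) * (L1n r / pi)" n "Dset n"])
  show "norm (trm n q r k) \<le> norm (?g k)" if "k \<in> Dset n" for k
    using trm_bound[OF assms(1) that q r] e by metis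
qed

lemma trm_summable:
  assumes "n > 0" and q: "set_integrable lborel {0..pi} q" and r: "set_integrable lborel {0..pi} r"
  shows "trm n q r summable_on Dset n"
  using abs_summable_summable[OF trm_abs_summable[OF assms]] .

definition Sf :: "int \<Rightarrow> real \<Rightarrow> real" where
  "Sf j x = (if j = 0 then x else sin (real_of_int j * x) / real_of_int j)"

lemma Sf_deriv: "(Sf j has_real_derivative cos (real_of_int j * x)) (at x within A)"
proof (cases "j = 0")
  case True
  then show ?thesis unfolding Sf_def by (auto intro!: derivative_eq_intros)
next
  case False
  have "((\<lambda>x. sin (real_of_int j * x) / real_of_int j) has_real_derivative
          cos (real_of_int j * x) * real_of_int j / real_of_int j) (at x within A)"
    by (auto intro!: derivative_eq_intros)
  then show ?thesis using False unfolding Sf_def by simp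
qed

lemma Sf_pi: "Sf j pi - Sf j 0 = (if j = 0 then pi else 0)"
  unfolding Sf_def by (simp add: mult.commute)

lemma si_cos: fixes a b c :: real shows "set_integrable lborel {a..b} (\<lambda>x. cos (c * x))"
  by (rule borel_integrable_atLeastAtMost') (auto intro!: continuous_intros)

lemma int_cos_int: "(LINT x:{0..pi}|lborel. cos (real_of_int j * x)) = (if j = 0 then pi else 0)"
proof -
  have "(LINT x:{0..pi}|lborel. cos (real_of_int j * x)) = Sf j pi - Sf j 0"
    unfolding set_lebesgue_integral_def
    by (rule integral_FTC_atLeastAtMost)
       (auto intro!: continuous_intros Sf_deriv[THEN has_real_derivative_iff_has_vector_derivative[THEN iffD1]])
  then show ?thesis by (simp add: Sf_pi)
qed

lemma int_cos_prod:
  fixes m :: nat and k :: int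
  assumes "m \<ge> 1"
  shows "(LINT x:{0..pi}|lborel. cos (real m * x) * cos (real_of_int k * x))
        = pi / 2 * (of_bool (k = int m) + of_bool (k = - int m))"
proof -
  have e: "cos (real m * x) * cos (real_of_int k * x)
      = 1/2 * cos (real_of_int (int m - k) * x) + 1/2 * cos (real_of_int (int m + k) * x)" for x
  proof -
    have a1: "real m * x - real_of_int k * x = real_of_int (int m - k) * x" by (simp add: algebra_simps)
    have a2: "real m * x + real_of_int k * x = real_of_int (int m + k) * x" by (simp add: algebra_simps)
    show ?thesis unfolding cos_times_cos a1 a2 by simp
  qed
  have "(LINT x:{0..pi}|lborel. cos (real m * x) * cos (real_of_int k * x))
     = 1/2 * (LINT x:{0..pi}|lborel. cos (real_of_int (int m - k) * x))
       + 1/2 * (LINT x:{0..pi}|lborel. cos (real_of_int (int m + k) * x))"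
    unfolding e by (simp add: si_cos)
  also have "\<dots> = pi / 2 * (of_bool (k = int m) + of_bool (k = - int m))"
    unfolding int_cos_int using assms by auto
  finally show ?thesis .
qed

abbreviation ebas :: "nat \<Rightarrow> real \<Rightarrow> complex" where
  "ebas m x \<equiv> complex_of_real (cos (real m * x))"

lemma cos_coeff_basis:
  fixes m :: nat and k :: int
  assumes "m \<ge> 1"
  shows "cos_coeff (ebas m) k = complex_of_real ((of_bool (k = int m) + of_bool (k = - int m)) / 2)"
proof -
  have "(LINT x:{0..pi}|lborel. ebas m x * complex_of_real (cos (real_of_int k * x)))
      = complex_of_real (LINT x:{0..pi}|lborel. cos (real m * x) * cos (real_of_int k * x))"
    by (subst set_integral_complex_of_real[symmetric]) simp
  then show ?thesis unfolding cos_coeff_def int_cos_prod[OF assms]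
    by simp
qed

lemma prim_basis:
  fixes m :: nat
  assumes "m \<ge> 1" "0 \<le> x"
  shows "prim (ebas m) x = complex_of_real (sin (real m * x) / real m)"
proof -
  have "(LINT t:{0..x}|lborel. cos (real m * t)) = Sf (int m) x - Sf (int m) 0"
    unfolding set_lebesgue_integral_def
    using assms Sf_deriv[of "int m", THEN has_real_derivative_iff_has_vector_derivative[THEN iffD1]]
    by (intro integral_FTC_atLeastAtMost) (auto intro!: continuous_intros)
  also have "\<dots> = sin (real m * x) / real m" using assms by (simp add: Sf_def)
  finally show ?thesis unfolding prim_def
    by (subst set_integral_complex_of_real) simp
qed

lemma sss_identity:
  fixes a b c :: real
  shows "sin a * sin b * cos c = (cos (a - b - c) + cos (a - b + c) - cos (a + b - c) - cos (a + b + c)) / 4"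
proof -
  have "sin a * sin b * cos c = (cos (a - b) * cos c - cos (a + b) * cos c) / 2"
    by (simp add: sin_times_sin left_diff_distrib)
  also have "\<dots> = ((cos (a - b - c) + cos (a - b + c)) / 2 - (cos (a + b - c) + cos (a + b + c)) / 2) / 2"
    by (simp only: cos_times_cos)
  finally show ?thesis by (simp add: field_simps)
qed

definition cosj :: "int \<Rightarrow> real \<Rightarrow> real" where "cosj j x = cos (real_of_int j * x)"

lemma si_cosj: "set_integrable lborel {0..pi} (cosj j)"
  unfolding cosj_def by (rule si_cos)

lemma int_cosj: "(LINT x:{0..pi}|lborel. cosj j x) = (if j = 0 then pi else 0)"
  unfolding cosj_def by (rule int_cos_int)

lemma int_sss:
  fixes m l n :: nat
  shows "(LINT x:{0..pi}|lborel. sin (real m * x) * sin (real l * x) * cos (2 * real n * x))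
     = pi / 4 * (of_bool (int m - int l - 2 * int n = 0) + of_bool (int m - int l + 2 * int n = 0)
                 - of_bool (int m + int l - 2 * int n = 0) - of_bool (int m + int l + 2 * int n = 0))"
proof -
  have e: "sin (real m * x) * sin (real l * x) * cos (2 * real n * x)
     = 1/4 * cosj (int m - int l - 2 * int n) x + 1/4 * cosj (int m - int l + 2 * int n) x
       - 1/4 * cosj (int m + int l - 2 * int n) x - 1/4 * cosj (int m + int l + 2 * int n) x" for x
  proof -
    have a1: "real m * x - real l * x - 2 * real n * x = real_of_int (int m - int l - 2 * int n) * x" by (simp add: algebra_simps)
    have a2: "real m * x - real l * x + 2 * real n * x = real_of_int (int m - int l + 2 * int n) * x" by (simp add: algebra_simps)
    have a3: "real m * x + real l * x - 2 * real n * x = real_of_int (int m + int l - 2 * int n) * x" by (simp add: algebra_simps)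
    have a4: "real m * x + real l * x + 2 * real n * x = real_of_int (int m + int l + 2 * int n) * x" by (simp add: algebra_simps)
    show ?thesis unfolding sss_identity a1 a2 a3 a4 by (simp add: cosj_def)
  qed
  have "(LINT x:{0..pi}|lborel. sin (real m * x) * sin (real l * x) * cos (2 * real n * x))
    = 1/4 * (LINT x:{0..pi}|lborel. cosj (int m - int l - 2 * int n) x) + 1/4 * (LINT x:{0..pi}|lborel. cosj (int m - int l + 2 * int n) x)
       - 1/4 * (LINT x:{0..pi}|lborel. cosj (int m + int l - 2 * int n) x) - 1/4 * (LINT x:{0..pi}|lborel. cosj (int m + int l + 2 * int n) x)"
    unfolding e by (simp add: si_cosj)
  then show ?thesis unfolding int_cosj by simp
qed

definition tr :: "nat \<Rightarrow> nat \<Rightarrow> nat \<Rightarrow> int \<Rightarrow> real" where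
  "tr n m l k = (of_bool (k = int m) + of_bool (k = - int m)) / 2
      * ((of_bool (k + 2 * int n = int l) + of_bool (k + 2 * int n = - int l)) / 2)
      / (real n ^ 2 - (real n + real_of_int k) ^ 2)"

definition Vml :: "nat \<Rightarrow> nat \<Rightarrow> nat \<Rightarrow> real" where
  "Vml n m l = - (1 / pi) * ((pi / 4 * (of_bool (int m - int l - 2 * int n = 0) + of_bool (int m - int l + 2 * int n = 0)
                 - of_bool (int m + int l - 2 * int n = 0) - of_bool (int m + int l + 2 * int n = 0))) / (real m * real l))"

lemma trm_basis:
  assumes "m \<ge> 1" "l \<ge> 1"
  shows "trm n (ebas m) (ebas l) k = complex_of_real (tr n m l k)"
  unfolding trm_def cos_coeff_basis[OF assms(1)] cos_coeff_basis[OF assms(2)] den_def tr_def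
  by (simp only: of_real_mult of_real_divide)

lemma tr_zero: "k \<noteq> int m \<Longrightarrow> k \<noteq> - int m \<Longrightarrow> tr n m l k = 0"
  unfolding tr_def by simp

lemma tr_pos:
  assumes "m \<ge> 1" "l \<ge> 1"
  shows "tr n m l (int m) = (if l = m + 2 * n then 1/4 else 0) / (- (real m * (real m + 2 * real n)))"
proof -
  have d: "real n ^ 2 - (real n + real_of_int (int m)) ^ 2 = - (real m * (real m + 2 * real n))"
    by (simp add: algebra_simps power2_eq_square)
  have e1: "(int m + 2 * int n = int l) = (l = m + 2 * n)" by linarith
  have "int m + 2 * int n \<noteq> - int l" using assms by linarith
  then have e2: "(int m + 2 * int n = - int l) = False" by simp
  have "int m \<noteq> - int m" using assms by linarith
  then have e3: "(int m = - int m) = False" by simp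
  show ?thesis unfolding tr_def d e1 e2 e3 by simp
qed

lemma tr_neg:
  assumes "m \<ge> 1" "l \<ge> 1"
  shows "tr n m l (- int m) = (if int l = 2 * int n - int m \<or> int l = int m - 2 * int n then 1/4 else 0)
           / (real m * (2 * real n - real m))"
proof -
  have d: "real n ^ 2 - (real n + real_of_int (- int m)) ^ 2 = real m * (2 * real n - real m)"
    by (simp add: algebra_simps power2_eq_square)
  have e1: "(- int m + 2 * int n = int l) = (int l = 2 * int n - int m)" by linarith
  have e2: "(- int m + 2 * int n = - int l) = (int l = int m - 2 * int n)" by linarith
  have "- int m \<noteq> int m" using assms by linarith
  then have e3: "(- int m = int m) = False" by simp
  have e4: "\<not> (int l = 2 * int n - int m \<and> int l = int m - 2 * int n)" using assms by linarith
  show ?thesis unfolding tr_def d e1 e2 e3 using e4 by auto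
qed

lemma tr_has_sum:
  assumes n: "n > 0" and m: "m \<ge> 1" and l: "l \<ge> 1"
  shows "(tr n m l has_sum Vml n m l) (Dset n)"
proof -
  let ?T = "{int m, - int m} \<inter> Dset n"
  have "(tr n m l has_sum Vml n m l) (Dset n) \<longleftrightarrow> (tr n m l has_sum Vml n m l) ?T"
    by (rule has_sum_cong_neutral) (auto intro: tr_zero)
  moreover have "(tr n m l has_sum Vml n m l) ?T"
  proof (rule has_sum_finiteI)
    show "finite ?T" by simp
    have mm: "real m \<ge> 1" "real l \<ge> 1" using m l by auto
    have pi0: "pi \<noteq> 0" by simp
    have mp2: "real m * (real m + 2 * real n) > 0" using mm by (simp add: add_pos_nonneg)
    show "Vml n m l = sum (tr n m l) ?T"
    proof (cases "m = 2 * n")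
      case True
      have T: "?T = {int m}" using True m by (auto simp: Dset_def)
      have s: "sum (tr n m l) ?T = tr n m l (int m)" unfolding T by simp
      have mp: "real m * (real m + 2 * real n) > 0" using mm by (simp add: add_pos_nonneg)
      show ?thesis unfolding s tr_pos[OF m l]
        using True mm pi0 n mp by (auto simp: Vml_def field_simps)
    next
      case False
      have T: "?T = {int m, - int m}" using False m by (auto simp: Dset_def)
      have ne: "int m \<noteq> - int m" using m by simp
      have s: "sum (tr n m l) ?T = tr n m l (int m) + tr n m l (- int m)" unfolding T using ne by simp
      show ?thesis unfolding s tr_pos[OF m l] tr_neg[OF m l]
      proof -
        consider (a) "l = m + 2 * n" | (b) "int l = 2 * int n - int m" | (c) "int l = int m - 2 * int n"
          | (d) "l \<noteq> m + 2 * n" "int l \<noteq> 2 * int n - int m" "int l \<noteq> int m - 2 * int n" by blast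
        then show "Vml n m l = (if l = m + 2 * n then 1 / 4 else 0) / - (real m * (real m + 2 * real n)) +
            (if int l = 2 * int n - int m \<or> int l = int m - 2 * int n then 1 / 4 else 0) / (real m * (2 * real n - real m))"
        proof cases
          case a
          then have "\<not> (int l = 2 * int n - int m \<or> int l = int m - 2 * int n)" using m n by linarith
          moreover have "real l = real m + 2 * real n" using a by simp
          ultimately show ?thesis using a mm pi0 mp2 by (auto simp: Vml_def field_simps)
        next
          case b
          then have "l \<noteq> m + 2 * n" using m n by linarith
          moreover have "real l = 2 * real n - real m" using b by (metis of_int_of_nat_eq of_int_diff of_int_mult of_int_numeral)
          then have E: "real m * (2 * real n - real m) = real m * real l" by simp
          have "\<not> (int m - int l - 2 * int n = 0)" "\<not> (int m - int l + 2 * int n = 0)" "int m + int l - 2 * int n = 0"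
            "\<not> (int m + int l + 2 * int n = 0)" using b m l n by linarith+
          with \<open>l \<noteq> m + 2 * n\<close> show ?thesis unfolding E using b mm pi0 by (simp add: Vml_def field_simps)
        next
          case c
          then have "l \<noteq> m + 2 * n" "int l \<noteq> 2 * int n - int m" using m n l by linarith+
          moreover have "real l = real m - 2 * real n" using c by (metis of_int_of_nat_eq of_int_diff of_int_mult of_int_numeral)
          then have E: "real m * (2 * real n - real m) = - (real m * real l)" by (simp only:) (simp add: algebra_simps)
          have "int m - int l - 2 * int n = 0" "\<not> (int m - int l + 2 * int n = 0)" "\<not> (int m + int l - 2 * int n = 0)"
            "\<not> (int m + int l + 2 * int n = 0)" using c m l n by linarith+
          with \<open>l \<noteq> m + 2 * n\<close> show ?thesis unfolding E using c mm pi0 by (simp add: Vml_def field_simps)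
        next
          case d
          then show ?thesis using mm pi0 by (auto simp: Vml_def)
        qed
      qed
    qed
  qed
  ultimately show ?thesis by blast
qed

definition cp :: "(nat \<Rightarrow> complex) \<Rightarrow> nat \<Rightarrow> real \<Rightarrow> complex" where
  "cp c N x = (\<Sum>m\<in>{1..N}. c m * ebas m x)"

definition RR :: "nat \<Rightarrow> (real \<Rightarrow> complex) \<Rightarrow> complex" where
  "RR n q = - (1 / pi) * (LINT x:{0..pi}|lborel. (prim q x)^2 * complex_of_real (cos (2 * real n * x)))"

lemma set_integral_sum':
  fixes f :: "'i \<Rightarrow> 'a \<Rightarrow> 'b::{banach, second_countable_topology}"
  assumes "finite I" "\<And>i. i \<in> I \<Longrightarrow> set_integrable M A (f i)"
  shows "set_integrable M A (\<lambda>x. \<Sum>i\<in>I. f i x)" "(LINT x:A|M. (\<Sum>i\<in>I. f i x)) = (\<Sum>i\<in>I. LINT x:A|M. f i x)"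
proof -
  have e: "(\<lambda>x. indicator A x *\<^sub>R (\<Sum>i\<in>I. f i x)) = (\<lambda>x. \<Sum>i\<in>I. indicator A x *\<^sub>R f i x)"
    by (simp only: scaleR_sum_right)
  have i: "integrable M (\<lambda>x. indicator A x *\<^sub>R f i x)" if "i \<in> I" for i
    using assms(2)[OF that] by (simp add: set_integrable_def)
  show "set_integrable M A (\<lambda>x. \<Sum>i\<in>I. f i x)"
    unfolding set_integrable_def e by (auto intro!: integrable_sum i)
  show "(LINT x:A|M. (\<Sum>i\<in>I. f i x)) = (\<Sum>i\<in>I. LINT x:A|M. f i x)"
    unfolding set_lebesgue_integral_def e by (auto intro!: Bochner_Integration.integral_sum i)
qed

lemma has_sum_sum':
  fixes f :: "'i \<Rightarrow> 'a \<Rightarrow> 'b::{topological_comm_monoid_add}"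
  assumes "finite I" "\<And>i. i \<in> I \<Longrightarrow> (f i has_sum s i) A"
  shows "((\<lambda>x. \<Sum>i\<in>I. f i x) has_sum (\<Sum>i\<in>I. s i)) A"
  using assms
proof (induction I rule: finite_induct)
  case empty then show ?case by simp
next
  case (insert i I)
  then show ?case by (simp add: has_sum_add)
qed

lemma si_cont_Icc: "continuous_on {a..b} f \<Longrightarrow> set_integrable lborel {a..b} (f :: real \<Rightarrow> complex)"
  by (rule borel_integrable_atLeastAtMost')

lemma si_cp: "set_integrable lborel {0..pi} (cp c N)"
  unfolding cp_def by (rule si_cont_Icc) (auto intro!: continuous_intros)

lemma cos_coeff_cp: "cos_coeff (cp c N) k = (\<Sum>m\<in>{1..N}. c m * cos_coeff (ebas m) k)"
proof -
  have e: "cp c N x * complex_of_real (cos (real_of_int k * x))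
       = (\<Sum>m\<in>{1..N}. c m * (ebas m x * complex_of_real (cos (real_of_int k * x))))" for x
    unfolding cp_def by (simp add: sum_distrib_right mult.assoc)
  have si: "set_integrable lborel {0..pi} (\<lambda>x. c m * (ebas m x * complex_of_real (cos (real_of_int k * x))))" for m
    by (rule si_cont_Icc) (auto intro!: continuous_intros)
  show ?thesis unfolding cos_coeff_def e set_integral_sum'(2)[OF finite_atLeastAtMost si]
    by (simp add: sum_distrib_left mult.left_commute)
qed

lemma prim_cp:
  assumes "0 \<le> x"
  shows "prim (cp c N) x = (\<Sum>m\<in>{1..N}. c m * complex_of_real (sin (real m * x) / real m))"
proof -
  have si: "set_integrable lborel {0..x} (\<lambda>t. c m * ebas m t)" for m
    by (rule si_cont_Icc) (auto intro!: continuous_intros)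
  have "prim (cp c N) x = (\<Sum>m\<in>{1..N}. c m * prim (ebas m) x)"
    unfolding prim_def cp_def set_integral_sum'(2)[OF finite_atLeastAtMost si] by simp
  also have "\<dots> = (\<Sum>m\<in>{1..N}. c m * complex_of_real (sin (real m * x) / real m))"
    by (rule sum.cong) (use assms in \<open>auto simp: prim_basis\<close>)
  finally show ?thesis .
qed

lemma RR_cp: "RR n (cp c N) = (\<Sum>m\<in>{1..N}. \<Sum>l\<in>{1..N}. c m * c l * complex_of_real (Vml n m l))"
proof -
  define g where "g m l x = sin (real m * x) * sin (real l * x) * cos (2 * real n * x) * (1 / (real m * real l))" for m l x
  have pt: "(prim (cp c N) x)^2 * complex_of_real (cos (2 * real n * x))
      = (\<Sum>m\<in>{1..N}. \<Sum>l\<in>{1..N}. c m * c l * complex_of_real (g m l x))" if "x \<in> {0..pi}" for x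
  proof -
    show ?thesis
      unfolding prim_cp[of x, OF conjunct1[OF that[simplified]]] power2_eq_square
      apply (simp only: sum_distrib_left sum_distrib_right)
      apply (intro sum.cong refl)
      by (simp add: g_def field_simps)
  qed
  have si: "set_integrable lborel {0..pi} (\<lambda>x. c m * c l * complex_of_real (g m l x))" for m l
    unfolding g_def by (rule si_cont_Icc) (intro continuous_intros)
  have si2: "set_integrable lborel {0..pi} (\<lambda>x. \<Sum>l\<in>{1..N}. c m * c l * complex_of_real (g m l x))" for m
    by (rule set_integral_sum'(1)[OF finite_atLeastAtMost si])
  have "(LINT x:{0..pi}|lborel. (prim (cp c N) x)^2 * complex_of_real (cos (2 * real n * x)))
     = (LINT x:{0..pi}|lborel. (\<Sum>m\<in>{1..N}. \<Sum>l\<in>{1..N}. c m * c l * complex_of_real (g m l x)))"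
    by (rule set_lebesgue_integral_cong) (use pt in auto)
  also have "\<dots> = (\<Sum>m\<in>{1..N}. \<Sum>l\<in>{1..N}. c m * c l * complex_of_real (LINT x:{0..pi}|lborel. g m l x))"
    unfolding set_integral_sum'(2)[OF finite_atLeastAtMost si2] set_integral_sum'(2)[OF finite_atLeastAtMost si]
    by (simp add: set_integral_complex_of_real)
  finally have I: "(LINT x:{0..pi}|lborel. (prim (cp c N) x)^2 * complex_of_real (cos (2 * real n * x)))
     = (\<Sum>m\<in>{1..N}. \<Sum>l\<in>{1..N}. c m * c l * complex_of_real (LINT x:{0..pi}|lborel. g m l x))" .
  have gI: "(LINT x:{0..pi}|lborel. g m l x) = (LINT x:{0..pi}|lborel. sin (real m * x) * sin (real l * x) * cos (2 * real n * x)) / (real m * real l)" for m l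
    unfolding g_def by simp
  show ?thesis unfolding RR_def I gI int_sss Vml_def
    apply (simp add: sum_distrib_left mult_ac)
    apply (intro sum.cong refl)
    by (auto simp: field_simps)
qed

lemma trm_cp: "trm n (cp c N) (cp c N) k = (\<Sum>m\<in>{1..N}. \<Sum>l\<in>{1..N}. c m * c l * trm n (ebas m) (ebas l) k)"
  unfolding trm_def cos_coeff_cp sum_product sum_divide_distrib
  by (intro sum.cong refl) (simp add: field_simps)

lemma main_cp:
  assumes "n > 0"
  shows "(trm n (cp c N) (cp c N) has_sum RR n (cp c N)) (Dset n)"
proof -
  have b: "((\<lambda>k. c m * c l * trm n (ebas m) (ebas l) k) has_sum (c m * c l * complex_of_real (Vml n m l))) (Dset n)"
    if "m \<in> {1..N}" "l \<in> {1..N}" for m l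
  proof -
    have m: "m \<ge> 1" and l: "l \<ge> 1" using that by auto
    have "((\<lambda>k. complex_of_real (tr n m l k)) has_sum complex_of_real (Vml n m l)) (Dset n)"
      using has_sum_of_real_iff tr_has_sum[OF assms m l] by blast
    moreover have "trm n (ebas m) (ebas l) = (\<lambda>k. complex_of_real (tr n m l k))"
      by (rule ext) (rule trm_basis[OF m l])
    ultimately have "(trm n (ebas m) (ebas l) has_sum complex_of_real (Vml n m l)) (Dset n)"
      by simp
    then show ?thesis by (rule has_sum_cmult_right)
  qed
  have "((\<lambda>k. \<Sum>m\<in>{1..N}. \<Sum>l\<in>{1..N}. c m * c l * trm n (ebas m) (ebas l) k)
     has_sum (\<Sum>m\<in>{1..N}. \<Sum>l\<in>{1..N}. c m * c l * complex_of_real (Vml n m l))) (Dset n)"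
    by (intro has_sum_sum' finite_atLeastAtMost b) auto
  then show ?thesis unfolding RR_cp trm_cp[symmetric] .
qed

inductive rp :: "(real \<Rightarrow> real) \<Rightarrow> bool" where
  rp_const: "rp (\<lambda>x. a)"
| rp_cos: "rp (\<lambda>x. a * cos (real m * x))"
| rp_add: "rp f \<Longrightarrow> rp g \<Longrightarrow> rp (\<lambda>x. f x + g x)"

lemma rp_cmult: "rp f \<Longrightarrow> rp (\<lambda>x. a * f x)"
proof (induction rule: rp.induct)
  case (rp_const b) then show ?case using rp.rp_const by simp
next
  case (rp_cos b m) then show ?case using rp.rp_cos[of "a * b" m] by (simp add: mult.assoc)
next
  case (rp_add f g) then show ?case using rp.rp_add[OF rp_add.IH] by (simp add: distrib_left)
qed

lemma rp_cos_cos: "rp (\<lambda>x. cos (real m * x) * (a * cos (real j * x)))"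
proof -
  have e1: "cos (real m * x) * (a * cos (real j * x))
      = a / 2 * cos (real m * x - real j * x) + a / 2 * cos (real (m + j) * x)" for x
  proof -
    have s1: "cos (real m * x) * (a * cos (real j * x)) = a * ((cos (real m * x - real j * x) + cos (real m * x + real j * x)) / 2)"
      by (subst mult.left_commute, subst cos_times_cos, rule refl)
    have s2: "real m * x + real j * x = real (m + j) * x" by (simp add: distrib_right)
    show ?thesis unfolding s1 s2 by (simp add: add_divide_distrib distrib_left)
  qed
  have e2: "cos (real m * x - real j * x) = cos (real (if j \<le> m then m - j else j - m) * x)" for x
  proof (cases "j \<le> m")
    case True then show ?thesis by (simp add: of_nat_diff left_diff_distrib)
  next
    case False
    then have "real m * x - real j * x = - (real (j - m) * x)" by (simp add: of_nat_diff algebra_simps)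
    then show ?thesis using False by simp
  qed
  show ?thesis unfolding e1 e2 by (intro rp.rp_add rp.rp_cos)
qed

lemma rp_mult_cos: "rp f \<Longrightarrow> rp (\<lambda>x. cos (real m * x) * f x)"
proof (induction rule: rp.induct)
  case (rp_const b) then show ?case using rp.rp_cos[of b m] by (simp add: mult.commute)
next
  case (rp_cos b j) then show ?case by (rule rp_cos_cos)
next
  case (rp_add f g) then show ?case using rp.rp_add[OF rp_add.IH] by (simp add: distrib_left)
qed

lemma rp_mult: "rp f \<Longrightarrow> rp g \<Longrightarrow> rp (\<lambda>x. f x * g x)"
proof (induction rule: rp.induct)
  case (rp_const b) then show ?case by (rule rp_cmult)
next
  case (rp_cos b m)
  have "rp (\<lambda>x. b * (cos (real m * x) * g x))" by (intro rp_cmult rp_mult_cos rp_cos.prems)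
  then show ?case by (simp add: mult.assoc)
next
  case (rp_add f1 f2)
  then show ?case using rp.rp_add[OF rp_add.IH] by (simp add: distrib_right)
qed

lemma rp_cont: "rp f \<Longrightarrow> continuous_on S f"
  by (induction rule: rp.induct) (auto intro!: continuous_intros)

lemma rp_ring: "function_ring_on (Collect rp) {0..pi}"
proof
  show "compact {0..pi}" by simp
  show "continuous_on {0..pi} f" if "f \<in> Collect rp" for f using that rp_cont by auto
  show "(\<lambda>x. f x + g x) \<in> Collect rp" if "f \<in> Collect rp" "g \<in> Collect rp" for f g
    using that rp_add by auto
  show "(\<lambda>x. f x * g x) \<in> Collect rp" if "f \<in> Collect rp" "g \<in> Collect rp" for f g
    using that rp_mult by auto
  show "(\<lambda>_. c) \<in> Collect rp" for c using rp_const by auto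
  show "\<exists>f\<in>Collect rp. f x \<noteq> f y" if "x \<in> {0..pi}" "y \<in> {0..pi}" "x \<noteq> y" for x y
  proof
    show "(\<lambda>x. 1 * cos (real 1 * x)) \<in> Collect rp" using rp_cos by blast
    show "1 * cos (real 1 * x) \<noteq> 1 * cos (real 1 * y)" using that cos_inj_pi by auto
  qed
qed

lemma rp_approx:
  assumes "continuous_on {0..pi} f" "e > 0"
  shows "\<exists>h. rp h \<and> (\<forall>x\<in>{0..pi}. \<bar>f x - h x\<bar> < e)"
proof -
  obtain F where F: "F \<in> UNIV \<rightarrow> Collect rp" and lim: "uniform_limit {0..pi} F f sequentially"
    using function_ring_on.Stone_Weierstrass[OF rp_ring assms(1)] by blast
  have "\<forall>\<^sub>F n in sequentially. \<forall>x\<in>{0..pi}. dist (F n x) (f x) < e"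
    by (rule uniform_limitD[OF lim assms(2)])
  then obtain n where "\<forall>x\<in>{0..pi}. dist (F n x) (f x) < e"
    unfolding eventually_sequentially by blast
  moreover have "rp (F n)" using F by auto
  ultimately show ?thesis by (auto simp: dist_real_def abs_minus_commute)
qed

lemma rp_repr: "rp f \<Longrightarrow> \<exists>a N. (\<forall>m>N. a m = 0) \<and> (\<forall>x. f x = a 0 + (\<Sum>m\<in>{1..N}. a m * cos (real m * x)))"
proof (induction rule: rp.induct)
  case (rp_const b)
  show ?case by (rule exI[of _ "\<lambda>m. if m = 0 then b else 0"], rule exI[of _ 0]) simp
next
  case (rp_cos b m)
  show ?case
  proof (cases "m = 0")
    case True
    then show ?thesis by (intro exI[of _ "\<lambda>j. if j = 0 then b else 0"] exI[of _ 0]) simp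
  next
    case False
    have "(\<Sum>j\<in>{1..m}. (if j = m then b else 0) * cos (real j * x)) = b * cos (real m * x)" for x
    proof -
      have "(\<Sum>j\<in>{1..m}. (if j = m then b else 0) * cos (real j * x)) = (\<Sum>j\<in>{1..m}. if j = m then b * cos (real j * x) else 0)"
        by (intro sum.cong) auto
      also have "\<dots> = b * cos (real m * x)" using False by (simp add: sum.delta')
      finally show ?thesis .
    qed
    then show ?thesis using False by (intro exI[of _ "\<lambda>j. if j = m then b else 0"] exI[of _ m]) simp
  qed
next
  case (rp_add f g)
  obtain a1 N1 where A1: "\<forall>m>N1. a1 m = 0" "\<forall>x. f x = a1 0 + (\<Sum>m\<in>{1..N1}. a1 m * cos (real m * x))"
    using rp_add.IH(1) by blast
  obtain a2 N2 where A2: "\<forall>m>N2. a2 m = 0" "\<forall>x. g x = a2 0 + (\<Sum>m\<in>{1..N2}. a2 m * cos (real m * x))"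
    using rp_add.IH(2) by blast
  define N where "N = max N1 N2"
  have ext: "(\<Sum>m\<in>{1..K}. a m * cos (real m * x)) = (\<Sum>m\<in>{1..N}. a m * cos (real m * x))"
    if "K \<le> N" "\<forall>m>K. a m = 0" for a K x
    by (rule sum.mono_neutral_left) (use that in auto)
  show ?case
  proof (intro exI[of _ "\<lambda>m. a1 m + a2 m"] exI[of _ N] conjI allI impI)
    show "a1 m + a2 m = 0" if "N < m" for m using that A1(1) A2(1) by (auto simp: N_def)
    fix x
    have "f x + g x = a1 0 + (\<Sum>m\<in>{1..N}. a1 m * cos (real m * x)) + (a2 0 + (\<Sum>m\<in>{1..N}. a2 m * cos (real m * x)))"
      using A1 A2 ext[of N1 a1 x] ext[of N2 a2 x] by (simp add: N_def)
    then show "f x + g x = a1 0 + a2 0 + (\<Sum>m\<in>{1..N}. (a1 m + a2 m) * cos (real m * x))"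
      by (simp add: sum.distrib distrib_right)
  qed
qed

lemma cp_approx:
  fixes g :: "real \<Rightarrow> complex"
  assumes "continuous_on {0..pi} g" "e > 0"
  shows "\<exists>c0 c N. \<forall>x\<in>{0..pi}. norm (g x - (c0 + cp c N x)) < e"
proof -
  have cr: "continuous_on {0..pi} (\<lambda>x. Re (g x))" "continuous_on {0..pi} (\<lambda>x. Im (g x))"
    using assms(1) by (auto intro!: continuous_intros)
  obtain h1 where h1: "rp h1" "\<forall>x\<in>{0..pi}. \<bar>Re (g x) - h1 x\<bar> < e / 2"
    using rp_approx[OF cr(1), of "e/2"] assms(2) by auto
  obtain h2 where h2: "rp h2" "\<forall>x\<in>{0..pi}. \<bar>Im (g x) - h2 x\<bar> < e / 2"
    using rp_approx[OF cr(2), of "e/2"] assms(2) by auto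
  obtain a1 N1 where A1: "\<forall>m>N1. a1 m = 0" "\<forall>x. h1 x = a1 0 + (\<Sum>m\<in>{1..N1}. a1 m * cos (real m * x))"
    using rp_repr[OF h1(1)] by blast
  obtain a2 N2 where A2: "\<forall>m>N2. a2 m = 0" "\<forall>x. h2 x = a2 0 + (\<Sum>m\<in>{1..N2}. a2 m * cos (real m * x))"
    using rp_repr[OF h2(1)] by blast
  define N where "N = max N1 N2"
  have ext: "(\<Sum>m\<in>{1..K}. a m * cos (real m * x)) = (\<Sum>m\<in>{1..N}. a m * cos (real m * x))"
    if "K \<le> N" "\<forall>m>K. a m = 0" for a K x
    by (rule sum.mono_neutral_left) (use that in auto)
  define c where "c m = Complex (a1 m) (a2 m)" for m
  define c0 where "c0 = Complex (a1 0) (a2 0)"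
  have repr: "c0 + cp c N x = Complex (h1 x) (h2 x)" for x
  proof -
    have "cp c N x = (\<Sum>m\<in>{1..N}. Complex (a1 m * cos (real m * x)) (a2 m * cos (real m * x)))"
      unfolding cp_def c_def by (intro sum.cong refl) (simp add: complex_eq_iff)
    also have "\<dots> = Complex (\<Sum>m\<in>{1..N}. a1 m * cos (real m * x)) (\<Sum>m\<in>{1..N}. a2 m * cos (real m * x))"
      by (simp add: complex_eq_iff Re_sum Im_sum)
    finally show ?thesis
      using A1 A2 ext[of N1 a1 x] ext[of N2 a2 x] by (simp add: N_def c0_def complex_eq_iff)
  qed
  show ?thesis
  proof (intro exI ballI)
    fix x assume x: "x \<in> {0..pi}"
    have "norm (g x - (c0 + cp c N x)) \<le> \<bar>Re (g x) - h1 x\<bar> + \<bar>Im (g x) - h2 x\<bar>"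
      unfolding repr using cmod_le[of "g x - Complex (h1 x) (h2 x)"] by simp
    also have "\<dots> < e" using h1(2) h2(2) x by fastforce
    finally show "norm (g x - (c0 + cp c N x)) < e" .
  qed
qed

definition clip :: "real \<Rightarrow> complex \<Rightarrow> complex" where
  "clip M z = (M / max M (norm z)) *\<^sub>R z"

lemma clip_cont: "M > 0 \<Longrightarrow> continuous_on UNIV (clip M)"
  unfolding clip_def by (intro continuous_intros) auto

lemma clip_bound: "M > 0 \<Longrightarrow> norm (clip M z) \<le> M"
proof -
  assume M: "M > 0"
  have "norm (clip M z) = M / max M (norm z) * norm z" unfolding clip_def using M by simp
  also have "\<dots> \<le> M" using M by (simp add: divide_simps max_def)
  finally show ?thesis .
qed

lemma clip_id: "M > 0 \<Longrightarrow> norm z \<le> M \<Longrightarrow> clip M z = z"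
  unfolding clip_def by (simp add: max_def)

lemma clip_diff: "M > 0 \<Longrightarrow> norm (z - clip M z) \<le> norm z"
proof -
  assume M: "M > 0"
  have "z - clip M z = (1 - M / max M (norm z)) *\<^sub>R z" unfolding clip_def by (simp add: algebra_simps)
  moreover have "0 \<le> 1 - M / max M (norm z)" "1 - M / max M (norm z) \<le> 1" using M by (auto simp: divide_simps max_def)
  ultimately show ?thesis by (simp add: mult_left_le_one_le)
qed

lemma clip_zero: "clip M 0 = 0" unfolding clip_def by simp

lemma AE_negligible: "negligible N \<Longrightarrow> AE x in lborel. x \<notin> N"
proof -
  assume "negligible N"
  then have "N \<in> null_sets lebesgue" by (simp add: negligible_iff_null_sets)
  then have "AE x in lebesgue. x \<notin> N" by (rule AE_not_in)
  then show ?thesis by (simp add: AE_completion_iff)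
qed

lemma cont_approx:
  fixes q :: "real \<Rightarrow> complex"
  assumes q: "set_integrable lborel {0..pi} q" and e: "e > 0"
  shows "\<exists>g. continuous_on UNIV g \<and> L1n (\<lambda>x. q x - g x) < e"
proof -
  define f where "f x = indicator {0..pi} x *\<^sub>R q x" for x
  have fi: "integrable lborel f" using q unfolding f_def set_integrable_def .
  have fm[measurable]: "f \<in> borel_measurable lborel" using fi by (rule borel_measurable_integrable)
  define s where "s i x = norm (f x - clip (real (Suc i)) (f x))" for i x
  define wq where "wq x = norm (f x)" for x
  have s_lim: "(\<lambda>i. integral\<^sup>L lborel (s i)) \<longlonglongrightarrow> integral\<^sup>L lborel (\<lambda>x. 0::real)"
  proof -
    have A: "s i \<in> borel_measurable lborel" for i unfolding s_def clip_def by measurable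
    have B: "integrable lborel wq" using fi unfolding wq_def by simp
    have C: "AE x in lborel. (\<lambda>i. s i x) \<longlonglongrightarrow> 0"
    proof (rule AE_I2)
      fix x
      obtain i0 :: nat where "norm (f x) \<le> real i0" using real_arch_simple by blast
      then have "\<forall>\<^sub>F i in sequentially. s i x = 0"
        unfolding eventually_sequentially s_def
        by (intro exI[of _ i0] allI impI) (simp add: clip_id)
      then show "(\<lambda>i. s i x) \<longlonglongrightarrow> 0" by (rule tendsto_eventually)
    qed
    have D: "AE x in lborel. norm (s i x) \<le> wq x" for i
      unfolding s_def wq_def using clip_diff by simp
    show ?thesis using Bochner_Integration.integral_dominated_convergence[of "\<lambda>x. 0::real" lborel s wq] A B C D by simp
  qed
  have "\<forall>\<^sub>F i in sequentially. integral\<^sup>L lborel (s i) < e / 2"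
    by (rule order_tendstoD(2)[OF s_lim]) (use e in simp)
  then obtain i where si: "integral\<^sup>L lborel (s i) < e / 2" unfolding eventually_sequentially by blast
  define M where "M = real (Suc i)"
  have M: "M > 0" unfolding M_def by simp
  define h where "h x = clip M (f x)" for x
  have hm[measurable]: "h \<in> borel_measurable lborel" unfolding h_def clip_def by measurable
  have "f \<in> borel_measurable lebesgue" using fm by (rule measurable_completion)
  then have "f measurable_on UNIV" by (rule lebesgue_measurable_imp_measurable_on) simp
  then obtain N G where N: "negligible N" and Gc: "\<And>n. continuous_on UNIV (G n)"
      and Gl: "\<And>x. x \<notin> N \<Longrightarrow> (\<lambda>n. G n x) \<longlonglongrightarrow> f x"
    unfolding measurable_on_def by auto
  define t where "t n x = indicator {0..pi} x *\<^sub>R norm (clip M (G n x) - h x)" for n x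
  define wt where "wt x = indicator {0..pi} x *\<^sub>R (2 * M)" for x
  have t_lim: "(\<lambda>n. integral\<^sup>L lborel (t n)) \<longlonglongrightarrow> integral\<^sup>L lborel (\<lambda>x. 0::real)"
  proof -
    have A: "t n \<in> borel_measurable lborel" for n
    proof -
      have [measurable]: "(\<lambda>x. clip M (G n x)) \<in> borel_measurable lborel"
      proof -
        have "continuous_on UNIV (\<lambda>x. clip M (G n x))" by (rule continuous_on_compose2[OF clip_cont[OF M] Gc]) auto
        then show ?thesis using borel_measurable_continuous_onI by simp
      qed
      show ?thesis unfolding t_def by measurable
    qed
    have B: "integrable lborel wt"
      using borel_integrable_atLeastAtMost'[of 0 pi "\<lambda>x. 2 * M"] unfolding wt_def by (simp add: set_integrable_def)
    have C: "AE x in lborel. (\<lambda>n. t n x) \<longlonglongrightarrow> 0"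
      using AE_negligible[OF N]
    proof eventually_elim
      case (elim x)
      have "(\<lambda>n. clip M (G n x)) \<longlonglongrightarrow> clip M (f x)"
        by (rule continuous_on_tendsto_compose[OF clip_cont[OF M] Gl[OF elim]]) auto
      then have "(\<lambda>n. clip M (G n x) - h x) \<longlonglongrightarrow> 0" unfolding h_def
        by (simp add: LIM_zero)
      then have "(\<lambda>n. norm (clip M (G n x) - h x)) \<longlonglongrightarrow> 0" by (simp add: tendsto_norm_zero)
      then have "(\<lambda>n. indicator {0..pi} x *\<^sub>R norm (clip M (G n x) - h x)) \<longlonglongrightarrow> indicator {0..pi} x *\<^sub>R 0"
        by (intro tendsto_intros)
      then show ?case unfolding t_def by simp
    qed
    have D: "AE x in lborel. norm (t n x) \<le> wt x" for n
    proof (rule AE_I2)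
      fix x
      have "norm (clip M (G n x) - h x) \<le> norm (clip M (G n x)) + norm (h x)" by (rule norm_triangle_ineq4)
      also have "\<dots> \<le> 2 * M" unfolding h_def using clip_bound[OF M] by (smt (verit))
      finally show "norm (t n x) \<le> wt x"
        unfolding t_def wt_def by (auto simp: indicator_def)
    qed
    show ?thesis using Bochner_Integration.integral_dominated_convergence[of "\<lambda>x. 0::real" lborel t wt] A B C D by simp
  qed
  have "\<forall>\<^sub>F n in sequentially. integral\<^sup>L lborel (t n) < e / 2"
    by (rule order_tendstoD(2)[OF t_lim]) (use e in simp)
  then obtain n where tn: "integral\<^sup>L lborel (t n) < e / 2" unfolding eventually_sequentially by blast
  define g where "g x = clip M (G n x)" for x
  have gc: "continuous_on UNIV g" unfolding g_def
    by (rule continuous_on_compose2[OF clip_cont[OF M] Gc]) auto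
  have gi: "set_integrable lborel {0..pi} g" by (rule borel_integrable_atLeastAtMost', rule continuous_on_subset[OF gc]) auto
  have hi: "set_integrable lborel {0..pi} h"
  proof -
    have "set_integrable lborel {0..pi} (\<lambda>x. clip M (q x))"
    proof (rule set_integrable_bound[OF borel_integrable_atLeastAtMost'[of 0 pi "\<lambda>x. complex_of_real M"]])
      show "continuous_on {0..pi} (\<lambda>x. complex_of_real M)" by simp
      have "(\<lambda>x. clip M (f x)) \<in> borel_measurable lborel" using hm unfolding h_def .
      then show "set_borel_measurable lborel {0..pi} (\<lambda>x. clip M (q x))"
        unfolding set_borel_measurable_def f_def
        by (rule measurable_cong[THEN iffD1, rotated]) (auto simp: indicator_def clip_zero)
      show "AE x in lborel. x \<in> {0..pi} \<longrightarrow> norm (clip M (q x)) \<le> norm (complex_of_real M)"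
        using clip_bound[OF M] M by auto
    qed
    then show ?thesis
      by (rule set_integrable_cong[THEN iffD1, rotated 3]) (auto simp: h_def f_def)
  qed
  have d1: "set_integrable lborel {0..pi} (\<lambda>x. norm (q x - h x))"
    by (intro set_integrable_norm set_integral_diff(1) q hi)
  have d2: "set_integrable lborel {0..pi} (\<lambda>x. norm (h x - g x))"
    by (intro set_integrable_norm set_integral_diff(1) gi hi)
  have "L1n (\<lambda>x. q x - g x) \<le> (LINT x:{0..pi}|lborel. norm (q x - h x) + norm (h x - g x))"
    unfolding L1n_def
    by (rule set_integral_mono) (auto intro!: set_integrable_norm set_integral_diff(1) q gi d1 d2 set_integral_add(1) norm_triangle_ineq simp del: set_integral_add set_integral_diff
        intro: order_trans[OF _ norm_triangle_ineq])
  also have "\<dots> = (LINT x:{0..pi}|lborel. norm (q x - h x)) + (LINT x:{0..pi}|lborel. norm (h x - g x))"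
    by (rule set_integral_add(2)[OF d1 d2])
  also have "(LINT x:{0..pi}|lborel. norm (q x - h x)) = integral\<^sup>L lborel (s i)"
    unfolding set_lebesgue_integral_def s_def h_def M_def
    by (rule Bochner_Integration.integral_cong) (auto simp: f_def indicator_def clip_zero)
  also have "(LINT x:{0..pi}|lborel. norm (h x - g x)) = integral\<^sup>L lborel (t n)"
    unfolding set_lebesgue_integral_def t_def g_def
    by (rule Bochner_Integration.integral_cong) (auto simp: norm_minus_commute)
  finally have "L1n (\<lambda>x. q x - g x) < e" using si tn by linarith
  then show ?thesis using gc by blast
qed

lemma int_cp_zero: "(LINT x:{0..pi}|lborel. cp c N x) = 0"
proof -
  have si: "set_integrable lborel {0..pi} (\<lambda>x. c m * ebas m x)" for m
    by (rule si_cont_Icc) (auto intro!: continuous_intros)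
  have z: "(LINT x:{0..pi}|lborel. c m * ebas m x) = 0" if "m \<in> {1..N}" for m
  proof -
    have "(LINT x:{0..pi}|lborel. cos (real m * x)) = 0"
      using int_cos_int[of "int m"] that by simp
    then show ?thesis by (simp add: set_integral_complex_of_real)
  qed
  show ?thesis unfolding cp_def set_integral_sum'(2)[OF finite_atLeastAtMost si]
    by (rule sum.neutral) (use z in blast)
qed

lemma int_q_zero:
  assumes "cos_coeff q 0 = 0"
  shows "(LINT x:{0..pi}|lborel. q x) = 0"
  using assms unfolding cos_coeff_def by simp

lemma set_integral_const_0pi: "(LINT x:{0..pi}|lborel. (c::'a::{banach, second_countable_topology})) = pi *\<^sub>R c"
  by (subst set_integral_const) auto

lemma density:
  fixes q :: "real \<Rightarrow> complex"
  assumes q: "set_integrable lborel {0..pi} q" and c0q: "cos_coeff q 0 = 0" and e: "e > 0"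
  shows "\<exists>c N. L1n (\<lambda>x. q x - cp c N x) < e"
proof -
  obtain g where gc: "continuous_on UNIV g" and gq: "L1n (\<lambda>x. q x - g x) < e / 4"
    using cont_approx[OF q, of "e/4"] e by auto
  have gc': "continuous_on {0..pi} g" using gc continuous_on_subset by blast
  have ep: "e / (4 * pi) > 0" using e by simp
  obtain c0 c N where app: "\<forall>x\<in>{0..pi}. norm (g x - (c0 + cp c N x)) < e / (4 * pi)"
    using cp_approx[OF gc' ep] by blast
  have gi: "set_integrable lborel {0..pi} g" by (rule si_cont_Icc[OF gc'])
  have cpi: "set_integrable lborel {0..pi} (cp c N)" by (rule si_cp)
  have ci: "set_integrable lborel {0..pi} (\<lambda>x. c0)" by (rule si_cont_Icc) simp
  have i1: "set_integrable lborel {0..pi} (\<lambda>x. norm (q x - g x))"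
    by (intro set_integrable_norm set_integral_diff(1) q gi)
  have i2: "set_integrable lborel {0..pi} (\<lambda>x. norm (g x - (c0 + cp c N x)))"
    by (intro set_integrable_norm set_integral_diff(1) set_integral_add(1) gi ci cpi)
  have i3: "set_integrable lborel {0..pi} (\<lambda>x. norm c0)" by (rule borel_integrable_atLeastAtMost') simp
  have L2: "(LINT x:{0..pi}|lborel. norm (g x - (c0 + cp c N x))) \<le> e / 4"
  proof -
    have "(LINT x:{0..pi}|lborel. norm (g x - (c0 + cp c N x))) \<le> (LINT x:{0..pi}|lborel. e / (4 * pi))"
      by (rule set_integral_mono[OF i2]) (use app in \<open>auto intro: borel_integrable_atLeastAtMost' less_imp_le\<close>)
    also have "\<dots> = e / 4" by (simp add: set_integral_const_0pi)
    finally show ?thesis .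
  qed
  have c0b: "pi * norm c0 < e / 2"
  proof -
    have "(LINT x:{0..pi}|lborel. (c0 + cp c N x) - g x) + (LINT x:{0..pi}|lborel. g x - q x)
        = (LINT x:{0..pi}|lborel. c0 + cp c N x) - (LINT x:{0..pi}|lborel. g x) + ((LINT x:{0..pi}|lborel. g x) - (LINT x:{0..pi}|lborel. q x))"
      by (simp add: set_integral_diff(2) set_integral_add(1) ci cpi gi q)
    also have "\<dots> = of_real pi * c0"
      using int_cp_zero[of c N] int_q_zero[OF c0q] by (simp add: set_integral_add(2)[OF ci cpi] set_integral_const_0pi scaleR_conv_of_real)
    finally have E: "of_real pi * c0 = (LINT x:{0..pi}|lborel. (c0 + cp c N x) - g x) + (LINT x:{0..pi}|lborel. g x - q x)" by simp
    have "pi * norm c0 = norm (of_real pi * c0)" by (simp add: norm_mult)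
    also have "\<dots> \<le> norm (LINT x:{0..pi}|lborel. (c0 + cp c N x) - g x) + norm (LINT x:{0..pi}|lborel. g x - q x)"
      unfolding E by (rule norm_triangle_ineq)
    also have "norm (LINT x:{0..pi}|lborel. (c0 + cp c N x) - g x) \<le> (LINT x:{0..pi}|lborel. norm ((c0 + cp c N x) - g x))"
      by (intro set_integral_norm_bound set_integral_diff(1) set_integral_add(1) gi ci cpi)
    also have "\<dots> = (LINT x:{0..pi}|lborel. norm (g x - (c0 + cp c N x)))" by (simp add: norm_minus_commute)
    also have "norm (LINT x:{0..pi}|lborel. g x - q x) \<le> (LINT x:{0..pi}|lborel. norm (g x - q x))"
      by (intro set_integral_norm_bound set_integral_diff(1) gi q)
    also have "\<dots> = L1n (\<lambda>x. q x - g x)" unfolding L1n_def by (simp add: norm_minus_commute)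
    finally show ?thesis using L2 gq by linarith
  qed
  have "L1n (\<lambda>x. q x - cp c N x) \<le> (LINT x:{0..pi}|lborel. norm (q x - g x) + norm (g x - (c0 + cp c N x)) + norm c0)"
    unfolding L1n_def
  proof (rule set_integral_mono)
    show "set_integrable lborel {0..pi} (\<lambda>x. norm (q x - cp c N x))"
      by (intro set_integrable_norm set_integral_diff(1) q cpi)
    show "set_integrable lborel {0..pi} (\<lambda>x. norm (q x - g x) + norm (g x - (c0 + cp c N x)) + norm c0)"
      by (intro set_integral_add(1) i1 i2 i3)
    fix x
    have "q x - cp c N x = (q x - g x) + (g x - (c0 + cp c N x)) + c0" by simp
    then show "norm (q x - cp c N x) \<le> norm (q x - g x) + norm (g x - (c0 + cp c N x)) + norm c0"
      by (metis norm_triangle_ineq order_trans add_right_mono)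
  qed
  also have "\<dots> = L1n (\<lambda>x. q x - g x) + (LINT x:{0..pi}|lborel. norm (g x - (c0 + cp c N x))) + pi * norm c0"
    unfolding L1n_def by (simp add: set_integral_add(2) i1 i2 i3 set_integral_add(1) set_integral_const_0pi)
  also have "\<dots> < e" using gq L2 c0b by linarith
  finally show ?thesis by blast
qed

lemma cos_coeff_diff:
  assumes q: "set_integrable lborel {0..pi} q" and p: "set_integrable lborel {0..pi} p"
  shows "cos_coeff (\<lambda>x. q x - p x) k = cos_coeff q k - cos_coeff p k"
proof -
  have e: "(\<lambda>x. (q x - p x) * complex_of_real (cos (real_of_int k * x)))
     = (\<lambda>x. q x * complex_of_real (cos (real_of_int k * x)) - p x * complex_of_real (cos (real_of_int k * x)))"
    by (simp add: left_diff_distrib)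
  show ?thesis unfolding cos_coeff_def e
    by (simp add: set_integral_diff(2)[OF si_mult_cos[OF q] si_mult_cos[OF p]] right_diff_distrib)
qed

lemma trm_diff:
  assumes q: "set_integrable lborel {0..pi} q" and p: "set_integrable lborel {0..pi} p"
  shows "trm n q q k = trm n p p k + (trm n (\<lambda>x. q x - p x) q k + trm n p (\<lambda>x. q x - p x) k)"
  unfolding trm_def cos_coeff_diff[OF q p] divide_inverse by algebra

lemma infsum_trm_bound:
  assumes n: "n > 0" and q: "set_integrable lborel {0..pi} q" and r: "set_integrable lborel {0..pi} r"
  shows "norm (infsum (trm n q r) (Dset n)) \<le> (L1n q / pi) * (L1n r / pi) * infsum (\<lambda>k. Kn n / (1 + real_of_int k ^ 2)) (Dset n)"
proof -
  have "norm (infsum (trm n q r) (Dset n)) \<le> infsum (\<lambda>k. norm (trm n q r k)) (Dset n)"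
    by (rule norm_infsum_bound) (rule trm_abs_summable[OF n q r])
  also have "\<dots> \<le> infsum (\<lambda>k. (L1n q / pi) * (L1n r / pi) * (Kn n / (1 + real_of_int k ^ 2))) (Dset n)"
    by (rule infsum_mono[OF trm_abs_summable[OF n q r] maj_summable]) (rule trm_bound[OF n _ q r])
  also have "\<dots> = (L1n q / pi) * (L1n r / pi) * infsum (\<lambda>k. Kn n / (1 + real_of_int k ^ 2)) (Dset n)"
    by (rule infsum_cmult_right) (use maj_summable[of 1] in simp)
  finally show ?thesis .
qed

lemma si_prim_sq:
  assumes q: "set_integrable lborel {0..pi} q"
  shows "set_integrable lborel {0..pi} (\<lambda>x. (prim q x)^2 * complex_of_real (cos (2 * real n * x)))"
  by (rule si_cont_Icc) (auto intro!: continuous_intros prim_cont[OF q])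

lemma sq_diff_bound:
  fixes a b :: complex and c D Ma Mb :: real
  assumes "norm (a - b) \<le> D" "norm a \<le> Ma" "norm b \<le> Mb" "\<bar>c\<bar> \<le> 1"
  shows "norm (a^2 * complex_of_real c - b^2 * complex_of_real c) \<le> D * (Ma + Mb)"
proof -
  have e: "a^2 * complex_of_real c - b^2 * complex_of_real c = (a - b) * (a + b) * complex_of_real c"
    by (simp add: power2_eq_square ring_distribs)
  have "norm (a + b) \<le> Ma + Mb" using norm_triangle_ineq[of a b] assms(2,3) by linarith
  moreover have "0 \<le> D" using assms(1) norm_ge_zero order_trans by blast
  ultimately have "norm (a - b) * norm (a + b) \<le> D * (Ma + Mb)"
    using assms(1) by (intro mult_mono) auto
  moreover have "norm (a - b) * norm (a + b) * \<bar>c\<bar> \<le> norm (a - b) * norm (a + b)"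
    using assms(4) by (intro mult_left_le) auto
  ultimately show ?thesis unfolding e by (simp add: norm_mult)
qed

lemma RR_diff_bound:
  assumes q: "set_integrable lborel {0..pi} q" and p: "set_integrable lborel {0..pi} p"
  shows "norm (RR n q - RR n p) \<le> L1n (\<lambda>x. q x - p x) * (L1n q + L1n p)"
proof -
  let ?d = "\<lambda>x. q x - p x"
  have d: "set_integrable lborel {0..pi} ?d" by (intro set_integral_diff(1) q p)
  let ?F = "\<lambda>x. (prim q x)^2 * complex_of_real (cos (2 * real n * x)) - (prim p x)^2 * complex_of_real (cos (2 * real n * x))"
  have Fi: "set_integrable lborel {0..pi} ?F" by (intro set_integral_diff(1) si_prim_sq q p)
  have "RR n q - RR n p = - (1 / pi) * (LINT x:{0..pi}|lborel. ?F x)"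
    unfolding RR_def set_integral_diff(2)[OF si_prim_sq[OF q] si_prim_sq[OF p]] by (simp only: right_diff_distrib)
  then have N1: "norm (RR n q - RR n p) = (1 / pi) * norm (LINT x:{0..pi}|lborel. ?F x)"
    by (simp add: norm_mult norm_divide)
  have N2: "norm (LINT x:{0..pi}|lborel. ?F x) \<le> (LINT x:{0..pi}|lborel. norm (?F x))"
    by (rule set_integral_norm_bound[OF Fi])
  have N3: "(LINT x:{0..pi}|lborel. norm (?F x)) \<le> (LINT x:{0..pi}|lborel. L1n ?d * (L1n q + L1n p))"
  proof (rule set_integral_mono)
    show "set_integrable lborel {0..pi} (\<lambda>x. norm (?F x))" by (rule set_integrable_norm[OF Fi])
    show "set_integrable lborel {0..pi} (\<lambda>x. L1n ?d * (L1n q + L1n p))" by (rule borel_integrable_atLeastAtMost') simp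
    fix x assume x: "x \<in> {0..pi}"
    have a: "prim q x - prim p x = prim ?d x" using prim_add(2)[OF q p, of x] x by simp
    show "norm (?F x) \<le> L1n ?d * (L1n q + L1n p)"
    proof (rule sq_diff_bound)
      show "norm (prim q x - prim p x) \<le> L1n ?d" unfolding a L1n_def using prim_bound[OF d] x by auto
      show "norm (prim q x) \<le> L1n q" unfolding L1n_def using prim_bound[OF q] x by auto
      show "norm (prim p x) \<le> L1n p" unfolding L1n_def using prim_bound[OF p] x by auto
    qed simp
  qed
  have N4: "(LINT x:{0..pi}|lborel. L1n ?d * (L1n q + L1n p)) = pi * (L1n ?d * (L1n q + L1n p))"
    by (simp add: set_integral_const_0pi)
  have "norm (LINT x:{0..pi}|lborel. ?F x) \<le> pi * (L1n ?d * (L1n q + L1n p))"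
    using N2 N3 N4 by linarith
  then have "(1 / pi) * norm (LINT x:{0..pi}|lborel. ?F x) \<le> (1 / pi) * (pi * (L1n ?d * (L1n q + L1n p)))"
    by (rule mult_left_mono) simp
  then show ?thesis unfolding N1 by simp
qed

lemma L1n_tri:
  assumes q: "set_integrable lborel {0..pi} q" and p: "set_integrable lborel {0..pi} p"
  shows "L1n p \<le> L1n q + L1n (\<lambda>x. q x - p x)"
proof -
  have d: "set_integrable lborel {0..pi} (\<lambda>x. q x - p x)" by (intro set_integral_diff(1) q p)
  have "L1n p \<le> (LINT x:{0..pi}|lborel. norm (q x) + norm (q x - p x))"
    unfolding L1n_def
  proof (rule set_integral_mono)
    show "set_integrable lborel {0..pi} (\<lambda>x. norm (p x))" by (rule set_integrable_norm[OF p])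
    show "set_integrable lborel {0..pi} (\<lambda>x. norm (q x) + norm (q x - p x))"
      by (intro set_integral_add(1) set_integrable_norm q d)
    fix x show "norm (p x) \<le> norm (q x) + norm (q x - p x)" using norm_triangle_ineq4[of "q x" "q x - p x"] by simp
  qed
  also have "\<dots> = L1n q + L1n (\<lambda>x. q x - p x)"
    unfolding L1n_def by (intro set_integral_add(2) set_integrable_norm q d)
  finally show ?thesis .
qed

lemma key:
  fixes q :: "real \<Rightarrow> complex"
  assumes n: "n > 0" and q: "set_integrable lborel {0..pi} q" and c0q: "cos_coeff q 0 = 0"
  shows "infsum (trm n q q) (Dset n) = RR n q"
proof -
  define W where "W = infsum (\<lambda>k. Kn n / (1 + real_of_int k ^ 2)) (Dset n)"
  have W0: "W \<ge> 0" unfolding W_def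
    by (rule infsum_nonneg) (use Kn_pos[of n] in \<open>auto intro!: divide_nonneg_pos add_pos_nonneg\<close>)
  define L where "L = L1n q"
  have L0: "L \<ge> 0" unfolding L_def by (rule L1n_nonneg)
  define Z where "Z = (2 * L + 1) * (W / pi^2 + 1)"
  have Z0: "Z > 0" unfolding Z_def using L0 W0 by (intro mult_pos_pos add_nonneg_pos) auto
  have bound: "norm (infsum (trm n q q) (Dset n) - RR n q) \<le> \<epsilon>" if eps: "\<epsilon> > 0" for \<epsilon>
  proof -
    define \<delta> where "\<delta> = min 1 (\<epsilon> / Z)"
    have \<delta>0: "\<delta> > 0" unfolding \<delta>_def using eps Z0 by simp
    obtain c N where cN: "L1n (\<lambda>x. q x - cp c N x) < \<delta>" using density[OF q c0q \<delta>0] by blast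
    define p where "p = cp c N"
    define Ld where "Ld = L1n (\<lambda>x. q x - p x)"
    have p: "set_integrable lborel {0..pi} p" unfolding p_def by (rule si_cp)
    have d: "set_integrable lborel {0..pi} (\<lambda>x. q x - p x)" by (intro set_integral_diff(1) q p)
    have Ld: "Ld < \<delta>" "Ld \<ge> 0" unfolding Ld_def p_def using cN L1n_nonneg by auto
    have Lp: "L1n p \<le> L + Ld" unfolding L_def Ld_def by (rule L1n_tri[OF q p])
    have A: "L + L1n p \<le> 2 * L + 1" using Lp Ld \<delta>_def by linarith
    have Lp0: "L1n p \<ge> 0" by (rule L1n_nonneg)
    have pRR: "infsum (trm n p p) (Dset n) = RR n p"
      unfolding p_def by (rule infsumI[OF main_cp[OF n]])
    have split: "infsum (trm n q q) (Dset n) = infsum (trm n p p) (Dset n)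
        + (infsum (trm n (\<lambda>x. q x - p x) q) (Dset n) + infsum (trm n p (\<lambda>x. q x - p x)) (Dset n))"
    proof -
      have "infsum (trm n q q) (Dset n) = infsum (\<lambda>k. trm n p p k + (trm n (\<lambda>x. q x - p x) q k + trm n p (\<lambda>x. q x - p x) k)) (Dset n)"
        by (rule infsum_cong) (rule trm_diff[OF q p])
      also have "\<dots> = infsum (trm n p p) (Dset n) + infsum (\<lambda>k. trm n (\<lambda>x. q x - p x) q k + trm n p (\<lambda>x. q x - p x) k) (Dset n)"
        by (intro infsum_add trm_summable summable_on_add n p q d)
      also have "infsum (\<lambda>k. trm n (\<lambda>x. q x - p x) q k + trm n p (\<lambda>x. q x - p x) k) (Dset n)
          = infsum (trm n (\<lambda>x. q x - p x) q) (Dset n) + infsum (trm n p (\<lambda>x. q x - p x)) (Dset n)"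
        by (intro infsum_add trm_summable n p q d)
      finally show ?thesis .
    qed
    have n1: "norm (infsum (trm n q q) (Dset n) - infsum (trm n p p) (Dset n)) \<le> Ld * (L + L1n p) * (W / pi^2)"
    proof -
      have "norm (infsum (trm n q q) (Dset n) - infsum (trm n p p) (Dset n))
          \<le> norm (infsum (trm n (\<lambda>x. q x - p x) q) (Dset n)) + norm (infsum (trm n p (\<lambda>x. q x - p x)) (Dset n))"
        unfolding split by (simp add: norm_triangle_ineq)
      also have "\<dots> \<le> (Ld / pi) * (L / pi) * W + (L1n p / pi) * (Ld / pi) * W"
        unfolding Ld_def L_def W_def by (intro add_mono infsum_trm_bound n p q d)
      also have "\<dots> = Ld * (L + L1n p) * (W / pi^2)" by (simp add: field_simps power2_eq_square)
      finally show ?thesis .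
    qed
    have n2: "norm (RR n p - RR n q) \<le> Ld * (L + L1n p)"
      using RR_diff_bound[OF q p, of n] unfolding Ld_def L_def by (simp add: norm_minus_commute)
    have "norm (infsum (trm n q q) (Dset n) - RR n q)
        \<le> norm (infsum (trm n q q) (Dset n) - infsum (trm n p p) (Dset n)) + norm (RR n p - RR n q)"
    proof -
      have "infsum (trm n q q) (Dset n) - RR n q = (infsum (trm n q q) (Dset n) - infsum (trm n p p) (Dset n)) + (RR n p - RR n q)"
        using pRR by simp
      then show ?thesis by (metis norm_triangle_ineq)
    qed
    also have "\<dots> \<le> Ld * (L + L1n p) * (W / pi^2 + 1)" using n1 n2 by (simp add: algebra_simps)
    also have "\<dots> \<le> \<delta> * (2 * L + 1) * (W / pi^2 + 1)"
      using Ld A L0 Lp0 W0 by (intro mult_mono) auto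
    also have "\<dots> = \<delta> * Z" unfolding Z_def by simp
    also have "\<dots> \<le> \<epsilon> / Z * Z" using Z0 by (intro mult_right_mono) (auto simp: \<delta>_def)
    also have "\<dots> = \<epsilon>" using Z0 by simp
    finally show ?thesis .
  qed
  show ?thesis
  proof (rule ccontr)
    assume ne: "infsum (trm n q q) (Dset n) \<noteq> RR n q"
    then have "norm (infsum (trm n q q) (Dset n) - RR n q) > 0" by simp
    then show False using bound[of "norm (infsum (trm n q q) (Dset n) - RR n q) / 2"] by simp
  qed
qed

theorem lemma2:
  fixes q :: "real \<Rightarrow> complex" and n :: nat
  assumes "set_integrable lborel {0..pi} q"
    and "cos_coeff q 0 = 0"
    and "n > 0"
  shows "((\<lambda>k::int. cos_coeff q k * cos_coeff q (k + 2 * int n)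
            / complex_of_real (real n ^ 2 - (real n + real_of_int k) ^ 2))
          has_sum
          (- (1 / pi) * (LINT x:{0..pi}|lborel. (prim q x)^2 * complex_of_real (cos (2 * real n * x)))))
         (UNIV - {0, - 2 * int n})"
proof -
  have f: "(\<lambda>k::int. cos_coeff q k * cos_coeff q (k + 2 * int n)
            / complex_of_real (real n ^ 2 - (real n + real_of_int k) ^ 2)) = trm n q q"
    by (rule ext) (simp add: trm_def den_def)
  have "(trm n q q has_sum infsum (trm n q q) (Dset n)) (Dset n)"
    using trm_summable[OF assms(3) assms(1) assms(1)] by simp
  then have "(trm n q q has_sum RR n q) (Dset n)" unfolding key[OF assms(3,1,2)] .
  then show ?thesis unfolding f RR_def Dset_def .
qed

end
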